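(* Let $0\le\alpha\le\beta\le\pi/2$, $P_1,P_2>0$, and define $\mathcal R(\theta)$ as in the context. Then the maximum of $R_1$ over $\bigcup_{\theta\in[\alpha,\beta]}\mathcal R(\theta)$ equals $\mathcal C(\phi_1(\alpha))$ and the maximum of $R_2$ over this set equals $\mathcal C(\phi_2(\beta))$.
   Context: $\mathcal C(x)=\frac12\log_2(1+x)$, $\phi_1(\theta)=P_1\cos^2(\theta-\alpha)$, $\phi_2(\theta)=P_2\cos^2(\theta-\beta)$, $\phi=\phi_1+\phi_2$, and $\mathcal R(\theta)=\{(R_1,R_2)\ge0:R_1\le\mathcal C(\phi_1(\theta)),R_2\le\mathcal C(\phi_2(\theta)),R_1+R_2\le\mathcal C(\phi(\theta))\}$. (In the two-hop MAC, $P_i=\|\mathbf h_{0i}\|^2P_{S_i}$ and $\bigcup_{\theta\in[\alpha,\beta]}\mathcal R(\theta)$ is the first outer bound.) *)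

theory Defs
  imports "HOL-Analysis.Analysis"
begin

definition capC :: "real \<Rightarrow> real" where
  "capC x = (1/2) * log 2 (1 + x)"

definition phi1 :: "real \<Rightarrow> real \<Rightarrow> real \<Rightarrow> real" where
  "phi1 P1 \<alpha> \<theta> = P1 * (cos (\<theta> - \<alpha>))^2"

definition phi2 :: "real \<Rightarrow> real \<Rightarrow> real \<Rightarrow> real" where
  "phi2 P2 \<beta> \<theta> = P2 * (cos (\<theta> - \<beta>))^2"

definition phi :: "real \<Rightarrow> real \<Rightarrow> real \<Rightarrow> real \<Rightarrow> real \<Rightarrow> real" where
  "phi P1 P2 \<alpha> \<beta> \<theta> = phi1 P1 \<alpha> \<theta> + phi2 P2 \<beta> \<theta>"

definition rateRegion :: "real \<Rightarrow> real \<Rightarrow> real \<Rightarrow> real \<Rightarrow> real \<Rightarrow> (real \<times> real) set" where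
  "rateRegion P1 P2 \<alpha> \<beta> \<theta> =
     {(R1, R2). R1 \<ge> 0 \<and> R2 \<ge> 0 \<and>
        R1 \<le> capC (phi1 P1 \<alpha> \<theta>) \<and> R2 \<le> capC (phi2 P2 \<beta> \<theta>) \<and>
        R1 + R2 \<le> capC (phi P1 P2 \<alpha> \<beta> \<theta>)}"

end

theory Submission
  imports Defs
begin

lemma capC_mono: "0 \<le> x \<Longrightarrow> x \<le> y \<Longrightarrow> capC x \<le> capC y"
  unfolding capC_def by (simp add: log_le_cancel_iff)

lemma capC_nonneg: "0 \<le> x \<Longrightarrow> 0 \<le> capC x"
  unfolding capC_def by simp

lemma cos2_le: "(cos t)^2 \<le> (1::real)"
  by (simp add: abs_square_le_1)

theorem lemma6:
  fixes \<alpha> \<beta> P1 P2 :: real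
  assumes "0 \<le> \<alpha>" "\<alpha> \<le> \<beta>" "\<beta> \<le> pi / 2" "P1 > 0" "P2 > 0"
  shows "capC (phi1 P1 \<alpha> \<alpha>) \<in> fst ` (\<Union>\<theta>\<in>{\<alpha>..\<beta>}. rateRegion P1 P2 \<alpha> \<beta> \<theta>)
       \<and> (\<forall>r \<in> (\<Union>\<theta>\<in>{\<alpha>..\<beta>}. rateRegion P1 P2 \<alpha> \<beta> \<theta>). fst r \<le> capC (phi1 P1 \<alpha> \<alpha>))
       \<and> capC (phi2 P2 \<beta> \<beta>) \<in> snd ` (\<Union>\<theta>\<in>{\<alpha>..\<beta>}. rateRegion P1 P2 \<alpha> \<beta> \<theta>)
       \<and> (\<forall>r \<in> (\<Union>\<theta>\<in>{\<alpha>..\<beta>}. rateRegion P1 P2 \<alpha> \<beta> \<theta>). snd r \<le> capC (phi2 P2 \<beta> \<beta>))"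
proof (intro conjI ballI)
  have p1: "phi1 P1 \<alpha> \<alpha> = P1" and p2: "phi2 P2 \<beta> \<beta> = P2" by (simp_all add: phi1_def phi2_def)
  have n1: "\<And>t. 0 \<le> phi1 P1 \<alpha> t" using assms by (simp add: phi1_def)
  have n2: "\<And>t. 0 \<le> phi2 P2 \<beta> t" using assms by (simp add: phi2_def)
  have u1: "\<And>t. phi1 P1 \<alpha> t \<le> P1" using assms cos2_le
    by (simp add: phi1_def mult_left_le)
  have u2: "\<And>t. phi2 P2 \<beta> t \<le> P2" using assms cos2_le
    by (simp add: phi2_def mult_left_le)
  have "(capC P1, 0) \<in> rateRegion P1 P2 \<alpha> \<beta> \<alpha>"
    unfolding rateRegion_def using p1 n1 n2 capC_nonneg[of P1] capC_nonneg[OF n2]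
      capC_mono[of P1 "phi P1 P2 \<alpha> \<beta> \<alpha>"] assms by (auto simp: phi_def)
  then show "capC (phi1 P1 \<alpha> \<alpha>) \<in> fst ` (\<Union>\<theta>\<in>{\<alpha>..\<beta>}. rateRegion P1 P2 \<alpha> \<beta> \<theta>)"
    using p1 assms by (metis (no_types, lifting) UN_iff atLeastAtMost_iff fst_conv image_eqI order_refl)
  have "(0, capC P2) \<in> rateRegion P1 P2 \<alpha> \<beta> \<beta>"
    unfolding rateRegion_def using p2 n1 n2 capC_nonneg[of P2] capC_nonneg[OF n1]
      capC_mono[of P2 "phi P1 P2 \<alpha> \<beta> \<beta>"] assms by (auto simp: phi_def)
  then show "capC (phi2 P2 \<beta> \<beta>) \<in> snd ` (\<Union>\<theta>\<in>{\<alpha>..\<beta>}. rateRegion P1 P2 \<alpha> \<beta> \<theta>)"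
    using p2 assms by (metis (no_types, lifting) UN_iff atLeastAtMost_iff snd_conv image_eqI order_refl)
  fix r assume "r \<in> (\<Union>\<theta>\<in>{\<alpha>..\<beta>}. rateRegion P1 P2 \<alpha> \<beta> \<theta>)"
  then obtain t where "r \<in> rateRegion P1 P2 \<alpha> \<beta> t" by blast
  then show "fst r \<le> capC (phi1 P1 \<alpha> \<alpha>)" unfolding rateRegion_def
    using capC_mono[OF n1 u1[of t]] p1 by auto
  show "snd r \<le> capC (phi2 P2 \<beta> \<beta>)" using \<open>r \<in> rateRegion P1 P2 \<alpha> \<beta> t\<close> unfolding rateRegion_def
    using capC_mono[OF n2 u2[of t]] p2 by auto
qed

end
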